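(* Let $K$ be a field of characteristic $p>3$, let $n\ge1$, let $O_n=K[x_1,\dots,x_n]/(x_1^p,\dots,x_n^p)$, let $W_n=\operatorname{Der}(O_n)$, let $D$ be a Lie subalgebra of $W_n$ such that $O_n$ has no $D$-invariant ideals other than $0$ and $O_n$, and let $S$ be a finite-dimensional simple Lie algebra over $K$. Consider the Lie algebra $(S\otimes O_n)\oplus D$ with brackets $[x\otimes f,y\otimes g]=[x,y]\otimes fg$, $[d,x\otimes f]=x\otimes d(f)$, and the bracket of $D$, for $x,y\in S$, $f,g\in O_n$, $d\in D$. Then $Z^2_{comm}((S\otimes O_n)\oplus D)\cong Z^2_{comm}(D)$.
   Context: For a Lie algebra $\mathfrak L$ over $K$, $Z^2_{comm}(\mathfrak L)$ denotes the vector space of commutative $2$-cocycles, i.e. symmetric bilinear forms $\varphi:\mathfrak L\times\mathfrak L\to K$ with $\varphi([x,y],z)+\varphi([z,x],y)+\varphi([y,z],x)=0$ for all $x,y,z\in\mathfrak L$. *)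

theory Defs
  imports "HOL.Vector_Spaces"
begin

definition lie_algebra ::
  "('k::field \<Rightarrow> 's::ab_group_add \<Rightarrow> 's) \<Rightarrow> ('s \<Rightarrow> 's \<Rightarrow> 's) \<Rightarrow> bool" where
  "lie_algebra sm br \<longleftrightarrow> vector_space sm \<and>
     (\<forall>x y z. br (x + y) z = br x z + br y z) \<and>
     (\<forall>x y z. br x (y + z) = br x y + br x z) \<and>
     (\<forall>c x y. br (sm c x) y = sm c (br x y)) \<and>
     (\<forall>c x y. br x (sm c y) = sm c (br x y)) \<and>
     (\<forall>x. br x x = 0) \<and>
     (\<forall>x y z. br x (br y z) + br y (br z x) + br z (br x y) = 0)"

definition lie_ideal ::
  "('k::field \<Rightarrow> 's::ab_group_add \<Rightarrow> 's) \<Rightarrow> ('s \<Rightarrow> 's \<Rightarrow> 's) \<Rightarrow> 's set \<Rightarrow> bool" where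
  "lie_ideal sm br I \<longleftrightarrow> 0 \<in> I \<and> (\<forall>x\<in>I. \<forall>y\<in>I. x + y \<in> I) \<and>
     (\<forall>c. \<forall>x\<in>I. sm c x \<in> I) \<and> (\<forall>x\<in>I. \<forall>y. br y x \<in> I)"

definition finite_dim ::
  "('k::field \<Rightarrow> 's::ab_group_add \<Rightarrow> 's) \<Rightarrow> bool" where
  "finite_dim sm \<longleftrightarrow> (\<exists>B. finite B \<and> (\<forall>x. \<exists>c. x = (\<Sum>b\<in>B. sm (c b) b)))"

definition simple_lie_algebra ::
  "('k::field \<Rightarrow> 's::ab_group_add \<Rightarrow> 's) \<Rightarrow> ('s \<Rightarrow> 's \<Rightarrow> 's) \<Rightarrow> bool" where
  "simple_lie_algebra sm br \<longleftrightarrow> lie_algebra sm br \<and> (\<exists>x y. br x y \<noteq> 0) \<and>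
     (\<forall>I. lie_ideal sm br I \<longrightarrow> I = {0} \<or> I = UNIV)"

text \<open>Elements are coefficient functions on the monomial basis x^\<alpha>, 
  \<alpha> an exponent vector with 0 \<le> \<alpha> i < p for i < n and \<alpha> i = 0 for i \<ge> n.\<close>

definition Mon :: "nat \<Rightarrow> nat \<Rightarrow> (nat \<Rightarrow> nat) set" where
  "Mon n p = {\<alpha>. (\<forall>i<n. \<alpha> i < p) \<and> (\<forall>i\<ge>n. \<alpha> i = 0)}"

definition On :: "nat \<Rightarrow> nat \<Rightarrow> ((nat \<Rightarrow> nat) \<Rightarrow> 'k::field) set" where
  "On n p = {f. \<forall>\<alpha>. \<alpha> \<notin> Mon n p \<longrightarrow> f \<alpha> = 0}"

definition On_zero :: "(nat \<Rightarrow> nat) \<Rightarrow> 'k::field" where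
  "On_zero = (\<lambda>\<alpha>. 0)"

definition On_add :: "((nat \<Rightarrow> nat) \<Rightarrow> 'k::field) \<Rightarrow> ((nat \<Rightarrow> nat) \<Rightarrow> 'k) \<Rightarrow> (nat \<Rightarrow> nat) \<Rightarrow> 'k" where
  "On_add f g = (\<lambda>\<alpha>. f \<alpha> + g \<alpha>)"

definition On_scale :: "'k::field \<Rightarrow> ((nat \<Rightarrow> nat) \<Rightarrow> 'k) \<Rightarrow> (nat \<Rightarrow> nat) \<Rightarrow> 'k" where
  "On_scale c f = (\<lambda>\<alpha>. c * f \<alpha>)"

definition mon_pairs :: "nat \<Rightarrow> nat \<Rightarrow> (nat \<Rightarrow> nat) \<Rightarrow> ((nat \<Rightarrow> nat) \<times> (nat \<Rightarrow> nat)) set" where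
  "mon_pairs n p \<gamma> = {(\<alpha>, \<beta>). \<alpha> \<in> Mon n p \<and> \<beta> \<in> Mon n p \<and> (\<lambda>i. \<alpha> i + \<beta> i) = \<gamma>}"

definition On_mult :: "nat \<Rightarrow> nat \<Rightarrow> ((nat \<Rightarrow> nat) \<Rightarrow> 'k::field) \<Rightarrow> ((nat \<Rightarrow> nat) \<Rightarrow> 'k) \<Rightarrow> (nat \<Rightarrow> nat) \<Rightarrow> 'k" where
  "On_mult n p f g = (\<lambda>\<gamma>. if \<gamma> \<in> Mon n p
      then (\<Sum>(\<alpha>, \<beta>)\<in>mon_pairs n p \<gamma>. f \<alpha> * g \<beta>) else 0)"

definition monom_basis :: "(nat \<Rightarrow> nat) \<Rightarrow> (nat \<Rightarrow> nat) \<Rightarrow> 'k::field" where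
  "monom_basis \<alpha> = (\<lambda>\<beta>. if \<beta> = \<alpha> then 1 else 0)"

definition On_ideal :: "nat \<Rightarrow> nat \<Rightarrow> ((nat \<Rightarrow> nat) \<Rightarrow> 'k::field) set \<Rightarrow> bool" where
  "On_ideal n p I \<longleftrightarrow> I \<subseteq> On n p \<and> On_zero \<in> I \<and>
     (\<forall>f\<in>I. \<forall>g\<in>I. On_add f g \<in> I) \<and>
     (\<forall>f\<in>On n p. \<forall>g\<in>I. On_mult n p f g \<in> I)"

text \<open>Derivations are K-linear maps O_n \<rightarrow> O_n satisfying the Leibniz rule;
  to make them unique as HOL functions they send everything outside O_n to 0.\<close>
definition Der :: "nat \<Rightarrow> nat \<Rightarrow>
   (((nat \<Rightarrow> nat) \<Rightarrow> 'k::field) \<Rightarrow> ((nat \<Rightarrow> nat) \<Rightarrow> 'k)) set" where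
  "Der n p = {d. (\<forall>f. f \<notin> On n p \<longrightarrow> d f = On_zero) \<and>
     (\<forall>f\<in>On n p. d f \<in> On n p) \<and>
     (\<forall>f\<in>On n p. \<forall>g\<in>On n p. d (On_add f g) = On_add (d f) (d g)) \<and>
     (\<forall>c. \<forall>f\<in>On n p. d (On_scale c f) = On_scale c (d f)) \<and>
     (\<forall>f\<in>On n p. \<forall>g\<in>On n p.
        d (On_mult n p f g) = On_add (On_mult n p (d f) g) (On_mult n p f (d g)))}"

definition der_add where "der_add d e = (\<lambda>f. On_add (d f) (e f))"
definition der_scale where "der_scale c d = (\<lambda>f. On_scale c (d f))"
definition der_zero :: "((nat \<Rightarrow> nat) \<Rightarrow> 'k::field) \<Rightarrow> ((nat \<Rightarrow> nat) \<Rightarrow> 'k)" where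
  "der_zero = (\<lambda>f. On_zero)"
definition der_br :: "(((nat \<Rightarrow> nat) \<Rightarrow> 'k::field) \<Rightarrow> ((nat \<Rightarrow> nat) \<Rightarrow> 'k)) \<Rightarrow>
   (((nat \<Rightarrow> nat) \<Rightarrow> 'k) \<Rightarrow> ((nat \<Rightarrow> nat) \<Rightarrow> 'k)) \<Rightarrow>
   ((nat \<Rightarrow> nat) \<Rightarrow> 'k) \<Rightarrow> ((nat \<Rightarrow> nat) \<Rightarrow> 'k)" where
  "der_br d e = (\<lambda>f \<alpha>. d (e f) \<alpha> - e (d f) \<alpha>)"

definition lie_subalgebra_Wn :: "nat \<Rightarrow> nat \<Rightarrow>
   (((nat \<Rightarrow> nat) \<Rightarrow> 'k::field) \<Rightarrow> ((nat \<Rightarrow> nat) \<Rightarrow> 'k)) set \<Rightarrow> bool" where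
  "lie_subalgebra_Wn n p D \<longleftrightarrow> D \<subseteq> Der n p \<and> der_zero \<in> D \<and>
     (\<forall>d\<in>D. \<forall>e\<in>D. der_add d e \<in> D) \<and> (\<forall>c. \<forall>d\<in>D. der_scale c d \<in> D) \<and>
     (\<forall>d\<in>D. \<forall>e\<in>D. der_br d e \<in> D)"

definition On_D_simple :: "nat \<Rightarrow> nat \<Rightarrow>
   (((nat \<Rightarrow> nat) \<Rightarrow> 'k::field) \<Rightarrow> ((nat \<Rightarrow> nat) \<Rightarrow> 'k)) set \<Rightarrow> bool" where
  "On_D_simple n p D \<longleftrightarrow> (\<forall>I. On_ideal n p I \<and> (\<forall>d\<in>D. \<forall>f\<in>I. d f \<in> I) \<longrightarrow>
      I = {On_zero} \<or> I = On n p)"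

section \<open>The current algebra S \<otimes> O_n, realised via the monomial basis of O_n:
  an element \<Sum>_\<alpha> s_\<alpha> \<otimes> x^\<alpha> is the function \<alpha> \<mapsto> s_\<alpha>\<close>

definition SO :: "nat \<Rightarrow> nat \<Rightarrow> ((nat \<Rightarrow> nat) \<Rightarrow> 's::ab_group_add) set" where
  "SO n p = {F. \<forall>\<alpha>. \<alpha> \<notin> Mon n p \<longrightarrow> F \<alpha> = 0}"

text \<open>[x \<otimes> f, y \<otimes> g] = [x,y] \<otimes> fg\<close>
definition SO_br :: "nat \<Rightarrow> nat \<Rightarrow> ('s::ab_group_add \<Rightarrow> 's \<Rightarrow> 's) \<Rightarrow>
   ((nat \<Rightarrow> nat) \<Rightarrow> 's) \<Rightarrow> ((nat \<Rightarrow> nat) \<Rightarrow> 's) \<Rightarrow> (nat \<Rightarrow> nat) \<Rightarrow> 's" where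
  "SO_br n p br F G = (\<lambda>\<gamma>. if \<gamma> \<in> Mon n p
      then (\<Sum>(\<alpha>, \<beta>)\<in>mon_pairs n p \<gamma>. br (F \<alpha>) (G \<beta>)) else 0)"

text \<open>[d, x \<otimes> f] = x \<otimes> d(f)\<close>
definition SO_act :: "nat \<Rightarrow> nat \<Rightarrow> ('k::field \<Rightarrow> 's::ab_group_add \<Rightarrow> 's) \<Rightarrow>
   (((nat \<Rightarrow> nat) \<Rightarrow> 'k) \<Rightarrow> ((nat \<Rightarrow> nat) \<Rightarrow> 'k)) \<Rightarrow>
   ((nat \<Rightarrow> nat) \<Rightarrow> 's) \<Rightarrow> (nat \<Rightarrow> nat) \<Rightarrow> 's" where
  "SO_act n p sm d F = (\<lambda>\<gamma>. \<Sum>\<alpha>\<in>Mon n p. sm (d (monom_basis \<alpha>) \<gamma>) (F \<alpha>))"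

type_synonym ('k, 's) Lelem =
  "((nat \<Rightarrow> nat) \<Rightarrow> 's) \<times> (((nat \<Rightarrow> nat) \<Rightarrow> 'k) \<Rightarrow> ((nat \<Rightarrow> nat) \<Rightarrow> 'k))"

definition L_carrier :: "nat \<Rightarrow> nat \<Rightarrow>
   (((nat \<Rightarrow> nat) \<Rightarrow> 'k::field) \<Rightarrow> ((nat \<Rightarrow> nat) \<Rightarrow> 'k)) set \<Rightarrow>
   ('k, 's::ab_group_add) Lelem set" where
  "L_carrier n p D = SO n p \<times> D"

definition L_add :: "('k::field, 's::ab_group_add) Lelem \<Rightarrow> ('k, 's) Lelem \<Rightarrow> ('k, 's) Lelem" where
  "L_add X Y = ((\<lambda>\<alpha>. fst X \<alpha> + fst Y \<alpha>), der_add (snd X) (snd Y))"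

definition L_scale :: "('k::field \<Rightarrow> 's::ab_group_add \<Rightarrow> 's) \<Rightarrow> 'k \<Rightarrow> ('k, 's) Lelem \<Rightarrow> ('k, 's) Lelem" where
  "L_scale sm c X = ((\<lambda>\<alpha>. sm c (fst X \<alpha>)), der_scale c (snd X))"

definition L_br :: "nat \<Rightarrow> nat \<Rightarrow> ('k::field \<Rightarrow> 's::ab_group_add \<Rightarrow> 's) \<Rightarrow> ('s \<Rightarrow> 's \<Rightarrow> 's) \<Rightarrow>
   ('k, 's) Lelem \<Rightarrow> ('k, 's) Lelem \<Rightarrow> ('k, 's) Lelem" where
  "L_br n p sm br X Y =
     ((\<lambda>\<gamma>. SO_br n p br (fst X) (fst Y) \<gamma> + SO_act n p sm (snd X) (fst Y) \<gamma>
            - SO_act n p sm (snd Y) (fst X) \<gamma>),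
      der_br (snd X) (snd Y))"

text \<open>Symmetric bilinear forms \<phi> on the carrier with
  \<phi>([x,y],z) + \<phi>([z,x],y) + \<phi>([y,z],x) = 0; forms vanish outside the carrier
  so that they are determined by their values on it.\<close>
definition Z2comm :: "'a set \<Rightarrow> ('a \<Rightarrow> 'a \<Rightarrow> 'a) \<Rightarrow> ('k::field \<Rightarrow> 'a \<Rightarrow> 'a) \<Rightarrow>
   ('a \<Rightarrow> 'a \<Rightarrow> 'a) \<Rightarrow> ('a \<Rightarrow> 'a \<Rightarrow> 'k) set" where
  "Z2comm C add sc br = {\<phi>.
     (\<forall>x y. x \<notin> C \<or> y \<notin> C \<longrightarrow> \<phi> x y = 0) \<and>
     (\<forall>x\<in>C. \<forall>y\<in>C. \<phi> x y = \<phi> y x) \<and>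
     (\<forall>x\<in>C. \<forall>y\<in>C. \<forall>z\<in>C. \<phi> (add x y) z = \<phi> x z + \<phi> y z) \<and>
     (\<forall>c. \<forall>x\<in>C. \<forall>z\<in>C. \<phi> (sc c x) z = c * \<phi> x z) \<and>
     (\<forall>x\<in>C. \<forall>y\<in>C. \<forall>z\<in>C. \<phi> (br x y) z + \<phi> (br z x) y + \<phi> (br y z) x = 0)}"

definition forms_iso :: "('a \<Rightarrow> 'a \<Rightarrow> 'k::field) set \<Rightarrow> ('b \<Rightarrow> 'b \<Rightarrow> 'k) set \<Rightarrow> bool" where
  "forms_iso A B \<longleftrightarrow> (\<exists>\<Phi>. bij_betw \<Phi> A B \<and>
     (\<forall>\<phi>\<in>A. \<forall>\<psi>\<in>A. \<Phi> (\<lambda>x y. \<phi> x y + \<psi> x y) = (\<lambda>x y. \<Phi> \<phi> x y + \<Phi> \<psi> x y)) \<and>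
     (\<forall>c. \<forall>\<phi>\<in>A. \<Phi> (\<lambda>x y. c * \<phi> x y) = (\<lambda>x y. c * \<Phi> \<phi> x y)))"

end

theory Submission
  imports Defs
begin



definition zv :: "nat \<Rightarrow> nat" where "zv = (\<lambda>i. 0)"
abbreviation one :: "(nat \<Rightarrow> nat) \<Rightarrow> 'k::field" where "one \<equiv> monom_basis zv"

lemma Mon_iff: "\<alpha> \<in> Mon n p \<longleftrightarrow> (\<forall>i<n. \<alpha> i < p) \<and> (\<forall>i\<ge>n. \<alpha> i = 0)"
  by (simp add: Mon_def)

lemma pairs_iff: "(a, b) \<in> mon_pairs n p g \<longleftrightarrow> a \<in> Mon n p \<and> b \<in> Mon n p \<and> (\<lambda>i. a i + b i) = g"
  by (simp add: mon_pairs_def)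

lemma finite_Mon: "finite (Mon n p)"
proof -
  have "Mon n p \<subseteq> (\<lambda>xs i. if i < n then xs ! i else 0) ` {xs. set xs \<subseteq> {..<p} \<and> length xs = n}"
  proof
    fix \<alpha> assume a: "\<alpha> \<in> Mon n p"
    have "\<alpha> = (\<lambda>i. if i < n then map \<alpha> [0..<n] ! i else 0)"
      using a by (auto simp: Mon_iff fun_eq_iff)
    moreover have "map \<alpha> [0..<n] \<in> {xs. set xs \<subseteq> {..<p} \<and> length xs = n}"
      using a by (auto simp: Mon_iff)
    ultimately show "\<alpha> \<in> (\<lambda>xs i. if i < n then xs ! i else 0) ` {xs. set xs \<subseteq> {..<p} \<and> length xs = n}"
      by blast
  qed
  moreover have "finite {xs. set xs \<subseteq> {..<p::nat} \<and> length xs = n}"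
    by (rule finite_lists_length_eq) simp
  ultimately show ?thesis by (meson finite_imageI finite_subset)
qed

lemma finite_pairs: "finite (mon_pairs n p g)"
proof -
  have "mon_pairs n p g \<subseteq> Mon n p \<times> Mon n p" by (auto simp: mon_pairs_def)
  thus ?thesis using finite_Mon by (meson finite_SigmaI finite_subset)
qed

lemma zv_Mon: "p > 0 \<Longrightarrow> zv \<in> Mon n p" by (simp add: Mon_iff zv_def)

lemma monom_On: "\<alpha> \<in> Mon n p \<Longrightarrow> monom_basis \<alpha> \<in> On n p"
  by (auto simp: On_def monom_basis_def)

lemma On_mult_On: "On_mult n p f g \<in> On n p"
  by (simp add: On_def On_mult_def)

lemma On_mult_one: assumes "f \<in> On n p" "p > 0" shows "On_mult n p f one = f"
proof
  fix \<gamma>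
  show "On_mult n p f one \<gamma> = f \<gamma>"
  proof (cases "\<gamma> \<in> Mon n p")
    case False thus ?thesis using assms by (simp add: On_mult_def On_def)
  next
    case True
    have "(\<Sum>(\<alpha>, \<beta>)\<in>mon_pairs n p \<gamma>. f \<alpha> * one \<beta>) = (\<Sum>x\<in>mon_pairs n p \<gamma>. if x = (\<gamma>, zv) then f \<gamma> else 0)"
    proof (rule sum.cong)
      fix x assume x: "x \<in> mon_pairs n p \<gamma>"
      obtain a b where ab: "x = (a,b)" by force
      have "b = zv \<Longrightarrow> a = \<gamma>" using x ab by (auto simp: pairs_iff zv_def fun_eq_iff)
      thus "(case x of (\<alpha>, \<beta>) \<Rightarrow> f \<alpha> * one \<beta>) = (if x = (\<gamma>, zv) then f \<gamma> else 0)"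
        using ab by (auto simp: monom_basis_def)
    qed simp
    also have "\<dots> = f \<gamma>"
      using True zv_Mon[OF assms(2)] by (simp add: finite_pairs pairs_iff zv_def)
    finally show ?thesis using True by (simp add: On_mult_def)
  qed
qed

lemma On_mult_comm: "On_mult n p f g = On_mult n p g f"
proof
  fix \<gamma>
  have "(\<Sum>(\<alpha>, \<beta>)\<in>mon_pairs n p \<gamma>. f \<alpha> * g \<beta>) = (\<Sum>(\<alpha>, \<beta>)\<in>mon_pairs n p \<gamma>. g \<alpha> * f \<beta>)"
    by (rule sum.reindex_bij_witness[where i="\<lambda>(a,b). (b,a)" and j="\<lambda>(a,b). (b,a)"])
       (auto simp: pairs_iff add.commute mult.commute)
  thus "On_mult n p f g \<gamma> = On_mult n p g f \<gamma>" by (simp add: On_mult_def)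
qed

lemma On_mult_one_left: assumes "f \<in> On n p" "p > 0" shows "On_mult n p one f = f"
  using On_mult_one[OF assms] On_mult_comm by metis




lemma On_mult_assoc: "On_mult n p (On_mult n p f g) h = On_mult n p f (On_mult n p g h)"
proof
  fix \<gamma>
  show "On_mult n p (On_mult n p f g) h \<gamma> = On_mult n p f (On_mult n p g h) \<gamma>"
  proof (cases "\<gamma> \<in> Mon n p")
    case False thus ?thesis by (simp add: On_mult_def)
  next
    case True
    let ?P = "mon_pairs n p"
    have L: "(\<Sum>(\<alpha>, \<beta>)\<in>?P \<gamma>. On_mult n p f g \<alpha> * h \<beta>) =
      (\<Sum>(x,y)\<in>Sigma (?P \<gamma>) (\<lambda>x. ?P (fst x)). f (fst y) * g (snd y) * h (snd x))"
    proof -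
      have "(\<Sum>(\<alpha>, \<beta>)\<in>?P \<gamma>. On_mult n p f g \<alpha> * h \<beta>) =
        (\<Sum>x\<in>?P \<gamma>. \<Sum>y\<in>?P (fst x). f (fst y) * g (snd y) * h (snd x))"
        by (rule sum.cong) (auto simp: On_mult_def pairs_iff sum_distrib_right intro!: sum.cong)
      also have "\<dots> = (\<Sum>(x,y)\<in>Sigma (?P \<gamma>) (\<lambda>x. ?P (fst x)). f (fst y) * g (snd y) * h (snd x))"
        by (rule sum.Sigma) (auto simp: finite_pairs)
      finally show ?thesis .
    qed
    have R: "(\<Sum>(\<alpha>, \<beta>)\<in>?P \<gamma>. f \<alpha> * On_mult n p g h \<beta>) =
      (\<Sum>(x,y)\<in>Sigma (?P \<gamma>) (\<lambda>x. ?P (snd x)). f (fst x) * g (fst y) * h (snd y))"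
    proof -
      have "(\<Sum>(\<alpha>, \<beta>)\<in>?P \<gamma>. f \<alpha> * On_mult n p g h \<beta>) =
        (\<Sum>x\<in>?P \<gamma>. \<Sum>y\<in>?P (snd x). f (fst x) * g (fst y) * h (snd y))"
        by (rule sum.cong) (auto simp: On_mult_def pairs_iff sum_distrib_left mult.assoc intro!: sum.cong)
      also have "\<dots> = (\<Sum>(x,y)\<in>Sigma (?P \<gamma>) (\<lambda>x. ?P (snd x)). f (fst x) * g (fst y) * h (snd y))"
        by (rule sum.Sigma) (auto simp: finite_pairs)
      finally show ?thesis .
    qed
    have M: "(\<Sum>(x,y)\<in>Sigma (?P \<gamma>) (\<lambda>x. ?P (fst x)). f (fst y) * g (snd y) * h (snd x)) =
      (\<Sum>(x,y)\<in>Sigma (?P \<gamma>) (\<lambda>x. ?P (snd x)). f (fst x) * g (fst y) * h (snd y))"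
    proof (rule sum.reindex_bij_witness[where
          j="\<lambda>((a,b),(c,d)). ((c, \<lambda>i. d i + b i), (d, b))" and
          i="\<lambda>((a,b),(c,d)). ((\<lambda>i. a i + c i, d), (a, c))"])
      fix z assume z: "z \<in> Sigma (?P \<gamma>) (\<lambda>x. ?P (fst x))"
      obtain a b c d where zz: "z = ((a,b),(c,d))" by (metis prod.collapse)
      have h: "a \<in> Mon n p" "b \<in> Mon n p" "c \<in> Mon n p" "d \<in> Mon n p"
        "(\<lambda>i. a i + b i) = \<gamma>" "(\<lambda>i. c i + d i) = a"
        using z zz by (auto simp: pairs_iff)
      have e1: "\<And>i. c i + (d i + b i) = \<gamma> i" using h unfolding fun_eq_iff by (metis add.assoc)
      have db: "(\<lambda>i. d i + b i) \<in> Mon n p"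
      proof -
        have "\<forall>i<n. d i + b i < p"
        proof (intro allI impI)
          fix i assume "i < n" then have "\<gamma> i < p" using True by (simp add: Mon_iff)
          thus "d i + b i < p" using e1[of i] by linarith
        qed
        thus ?thesis using h(2,4) by (simp add: Mon_iff)
      qed
      show "(case case z of (x, xa) \<Rightarrow> (case x of (a, b) \<Rightarrow> \<lambda>(c, d). ((c, \<lambda>i. d i + b i), d, b)) xa of
           (x, xa) \<Rightarrow> (case x of (a, b) \<Rightarrow> \<lambda>(c, d). ((\<lambda>i. a i + c i, d), a, c)) xa) = z"
        using h zz by (auto simp: fun_eq_iff)
      show "(case z of (x, xa) \<Rightarrow> (case x of (a, b) \<Rightarrow> \<lambda>(c, d). ((c, \<lambda>i. d i + b i), d, b)) xa)
            \<in> Sigma (?P \<gamma>) (\<lambda>x. ?P (snd x))"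
        using h zz db e1 by (auto simp: pairs_iff fun_eq_iff)
      show "(case case z of (x, xa) \<Rightarrow> (case x of (a, b) \<Rightarrow> \<lambda>(c, d). ((c, \<lambda>i. d i + b i), d, b)) xa of
           (x, y) \<Rightarrow> f (fst x) * g (fst y) * h (snd y)) =
          (case z of (x, y) \<Rightarrow> f (fst y) * g (snd y) * h (snd x))"
        using zz by simp
    next
      fix z assume z: "z \<in> Sigma (?P \<gamma>) (\<lambda>x. ?P (snd x))"
      obtain a b c d where zz: "z = ((a,b),(c,d))" by (metis prod.collapse)
      have h: "a \<in> Mon n p" "b \<in> Mon n p" "c \<in> Mon n p" "d \<in> Mon n p"
        "(\<lambda>i. a i + b i) = \<gamma>" "(\<lambda>i. c i + d i) = b"
        using z zz by (auto simp: pairs_iff)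
      have e2: "\<And>i. (a i + c i) + d i = \<gamma> i" using h unfolding fun_eq_iff by (metis add.assoc)
      have ac: "(\<lambda>i. a i + c i) \<in> Mon n p"
      proof -
        have "\<forall>i<n. a i + c i < p"
        proof (intro allI impI)
          fix i assume "i < n" then have "\<gamma> i < p" using True by (simp add: Mon_iff)
          thus "a i + c i < p" using e2[of i] by linarith
        qed
        thus ?thesis using h(1,3) by (simp add: Mon_iff)
      qed
      show "(case case z of (x, xa) \<Rightarrow> (case x of (a, b) \<Rightarrow> \<lambda>(c, d). ((\<lambda>i. a i + c i, d), a, c)) xa of
           (x, xa) \<Rightarrow> (case x of (a, b) \<Rightarrow> \<lambda>(c, d). ((c, \<lambda>i. d i + b i), d, b)) xa) = z"
        using h zz by (auto simp: fun_eq_iff)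
      show "(case z of (x, xa) \<Rightarrow> (case x of (a, b) \<Rightarrow> \<lambda>(c, d). ((\<lambda>i. a i + c i, d), a, c)) xa)
            \<in> Sigma (?P \<gamma>) (\<lambda>x. ?P (fst x))"
        using h zz ac e2 by (auto simp: pairs_iff fun_eq_iff)
    qed
    show ?thesis using True L R M by (simp add: On_mult_def)
  qed
qed




lemma On_zero_On: "On_zero \<in> On n p" by (simp add: On_def On_zero_def)
lemma On_add_On: "f \<in> On n p \<Longrightarrow> g \<in> On n p \<Longrightarrow> On_add f g \<in> On n p"
  by (simp add: On_def On_add_def)
lemma On_scale_On: "f \<in> On n p \<Longrightarrow> On_scale c f \<in> On n p"
  by (simp add: On_def On_scale_def)

lemma On_mult_zero: "On_mult n p h On_zero = On_zero"
  by (simp add: On_mult_def On_zero_def fun_eq_iff)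

lemma On_mult_add: "On_mult n p h (On_add f g) = On_add (On_mult n p h f) (On_mult n p h g)"
  by (simp add: On_mult_def On_add_def fun_eq_iff case_prod_beta distrib_left sum.distrib)

lemma On_mult_add_left: "On_mult n p (On_add f g) h = On_add (On_mult n p f h) (On_mult n p g h)"
  by (metis On_mult_add On_mult_comm)

lemma Der_add: "d \<in> Der n p \<Longrightarrow> f \<in> On n p \<Longrightarrow> g \<in> On n p \<Longrightarrow> d (On_add f g) = On_add (d f) (d g)"
  by (simp add: Der_def)
lemma Der_scale: "d \<in> Der n p \<Longrightarrow> f \<in> On n p \<Longrightarrow> d (On_scale c f) = On_scale c (d f)"
  by (simp add: Der_def)
lemma Der_mult: "d \<in> Der n p \<Longrightarrow> f \<in> On n p \<Longrightarrow> g \<in> On n p \<Longrightarrow>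
    d (On_mult n p f g) = On_add (On_mult n p (d f) g) (On_mult n p f (d g))"
  by (simp add: Der_def)

lemma Der_On: "d \<in> Der n p \<Longrightarrow> d f \<in> On n p"
  by (cases "f \<in> On n p") (auto simp: Der_def On_zero_On)

lemma Der_zero: assumes "d \<in> Der n p" shows "d On_zero = On_zero"
proof -
  have e: "On_scale 0 (On_zero :: (nat \<Rightarrow> nat) \<Rightarrow> 'a) = On_zero" by (simp add: On_zero_def On_scale_def)
  have "d On_zero = On_scale 0 (d On_zero)" using Der_scale[OF assms On_zero_On, of 0] unfolding e .
  thus ?thesis by (simp add: On_scale_def On_zero_def)
qed

lemma Der_one: assumes "d \<in> Der n p" "p > 0" shows "d one = On_zero"
proof -
  have o: "one \<in> On n p" using monom_On zv_Mon assms(2) by blast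
  have "d (On_mult n p one one) = On_add (On_mult n p (d one) one) (On_mult n p one (d one))"
    using Der_mult[OF assms(1) o o] .
  hence E: "d one = On_add (d one) (d one)"
    unfolding On_mult_one[OF o assms(2)] On_mult_one[OF Der_On[OF assms(1)] assms(2)]
      On_mult_one_left[OF Der_On[OF assms(1)] assms(2)] .
  have h: "d one x = d one x + d one x" for x using fun_cong[OF E, of x] unfolding On_add_def by (simp only:)
  show ?thesis unfolding On_zero_def
  proof
    fix x show "d one x = 0" using h[of x] add_cancel_right_right[of "d one x" "d one x"] by simp
  qed
qed

lemma Der_expand: assumes d: "d \<in> Der n p" and g: "g \<in> On n p"
  shows "d g \<gamma> = (\<Sum>\<alpha>\<in>Mon n p. g \<alpha> * d (monom_basis \<alpha>) \<gamma>)"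
proof -
  have main: "finite A \<Longrightarrow> A \<subseteq> Mon n p \<Longrightarrow> d (\<lambda>\<beta>. if \<beta> \<in> A then g \<beta> else 0) \<gamma> = (\<Sum>\<alpha>\<in>A. g \<alpha> * d (monom_basis \<alpha>) \<gamma>)"
    for A
  proof (induction A rule: finite_induct)
    case empty
    have "(\<lambda>\<beta>. if \<beta> \<in> {} then g \<beta> else 0) = On_zero" by (simp add: On_zero_def fun_eq_iff)
    thus ?case using Der_zero[OF d] by (simp add: On_zero_def)
  next
    case (insert a A)
    have gA: "(\<lambda>\<beta>. if \<beta> \<in> A then g \<beta> else 0) \<in> On n p" using insert by (auto simp: On_def)
    have ma: "monom_basis a \<in> On n p" using insert monom_On by blast
    have eq: "(\<lambda>\<beta>. if \<beta> \<in> insert a A then g \<beta> else 0) =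
      On_add (\<lambda>\<beta>. if \<beta> \<in> A then g \<beta> else 0) (On_scale (g a) (monom_basis a))"
      using insert by (intro ext) (auto simp: On_add_def On_scale_def monom_basis_def)
    have "d (On_add (\<lambda>\<beta>. if \<beta> \<in> A then g \<beta> else 0) (On_scale (g a) (monom_basis a)))
       = On_add (d (\<lambda>\<beta>. if \<beta> \<in> A then g \<beta> else 0)) (On_scale (g a) (d (monom_basis a)))"
      using Der_add[OF d gA On_scale_On[OF ma]] Der_scale[OF d ma] by simp
    hence "d (\<lambda>\<beta>. if \<beta> \<in> insert a A then g \<beta> else 0) \<gamma> =
       d (\<lambda>\<beta>. if \<beta> \<in> A then g \<beta> else 0) \<gamma> + g a * d (monom_basis a) \<gamma>"
      unfolding eq by (simp add: On_add_def On_scale_def)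
    thus ?case using insert by (simp add: add.commute)
  qed
  have "(\<lambda>\<beta>. if \<beta> \<in> Mon n p then g \<beta> else 0) = g" using g by (auto simp: On_def fun_eq_iff)
  thus ?thesis using main[of "Mon n p"] finite_Mon by simp
qed




locale slie =
  fixes sm :: "'k::field \<Rightarrow> 's::ab_group_add \<Rightarrow> 's" and br :: "'s \<Rightarrow> 's \<Rightarrow> 's"
  assumes simple: "simple_lie_algebra sm br"
    and two: "(2::'k) \<noteq> 0"
begin

lemma lie: "lie_algebra sm br" using simple by (simp add: simple_lie_algebra_def)
lemma vs: "vector_space sm" using lie by (simp add: lie_algebra_def)

sublocale S: vector_space sm by (rule vs)

lemma br_addL: "br (x + y) z = br x z + br y z" using lie by (simp add: lie_algebra_def)
lemma br_addR: "br x (y + z) = br x y + br x z" using lie by (simp add: lie_algebra_def)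
lemma br_smL: "br (sm c x) y = sm c (br x y)" using lie by (simp add: lie_algebra_def)
lemma br_smR: "br x (sm c y) = sm c (br x y)" using lie by (simp add: lie_algebra_def)
lemma br_self: "br x x = 0" using lie by (simp add: lie_algebra_def)
lemma jacobi: "br x (br y z) + br y (br z x) + br z (br x y) = 0" using lie by (simp add: lie_algebra_def)

lemma br_zeroL: "br 0 x = 0" using br_addL[of 0 0 x] by simp
lemma br_zeroR: "br x 0 = 0" using br_addR[of x 0 0] by simp
lemma br_anti: "br y x = - br x y"
proof -
  have "br (x + y) (x + y) = br x x + br y x + (br x y + br y y)" by (simp only: br_addL br_addR)
  hence "br x y + br y x = 0" by (simp add: br_self add.commute)
  from minus_unique[OF this] show ?thesis by simp
qed
lemma br_minusL: "br (- x) y = - br x y"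
proof -
  have "br x y + br (- x) y = 0" using br_addL[of x "-x" y] by (simp add: br_zeroL)
  from minus_unique[OF this] show ?thesis by simp
qed
lemma br_minusR: "br x (- y) = - br x y"
proof -
  have "br x y + br x (- y) = 0" using br_addR[of x y "-y"] by (simp add: br_zeroR)
  from minus_unique[OF this] show ?thesis by simp
qed
lemma br_diffL: "br (x - y) z = br x z - br y z"
  using br_addL[of x "-y" z] by (simp add: br_minusL)
lemma br_diffR: "br z (x - y) = br z x - br z y"
  using br_addR[of z x "-y"] by (simp add: br_minusR)

lemma jac2: "br (br a b) s = br a (br b s) - br b (br a s)"
proof -
  have j: "br a (br b s) + br b (br s a) + br s (br a b) = 0" by (rule jacobi)
  have e1: "br b (br s a) = - br b (br a s)" using br_anti[of s a] by (simp add: br_minusR)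
  have e2: "br s (br a b) = - br (br a b) s" by (rule br_anti)
  have "br a (br b s) - br b (br a s) - br (br a b) s = 0" using j unfolding e1 e2 by (simp add: algebra_simps)
  thus ?thesis by (simp add: algebra_simps)
qed

inductive_set Brs :: "'s set" where
  "0 \<in> Brs" | "br a b \<in> Brs" | "x \<in> Brs \<Longrightarrow> y \<in> Brs \<Longrightarrow> x + y \<in> Brs"

lemma Brs_sm: "x \<in> Brs \<Longrightarrow> sm c x \<in> Brs"
proof (induction rule: Brs.induct)
  case 1 thus ?case using Brs.intros(1) by simp
next
  case (2 a b) thus ?case using Brs.intros(2)[of "sm c a" b] by (simp add: br_smL)
next
  case (3 x y) thus ?case using Brs.intros(3) by (simp add: S.scale_right_distrib)
qed

lemma Brs_UNIV: "Brs = UNIV"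
proof -
  have "lie_ideal sm br Brs"
    unfolding lie_ideal_def
  proof (intro conjI ballI allI)
    show "0 \<in> Brs" by (rule Brs.intros(1))
  next
    fix x y assume "x \<in> Brs" "y \<in> Brs" thus "x + y \<in> Brs" by (rule Brs.intros(3))
  next
    fix c x assume "x \<in> Brs" thus "sm c x \<in> Brs" by (rule Brs_sm)
  next
    fix x y show "br y x \<in> Brs" by (rule Brs.intros(2))
  qed
  hence "Brs = {0} \<or> Brs = UNIV" using simple by (simp add: simple_lie_algebra_def)
  moreover obtain x y where "br x y \<noteq> 0" using simple by (auto simp: simple_lie_algebra_def)
  moreover have "br x y \<in> Brs" by (rule Brs.intros(2))
  ultimately show ?thesis by auto
qed

lemma perfect_induct:
  assumes "Q 0" "\<And>x y. Q x \<Longrightarrow> Q y \<Longrightarrow> Q (x + y)" "\<And>a b. Q (br a b)"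
  shows "Q s"
proof -
  have "s \<in> Brs" using Brs_UNIV by simp
  thus ?thesis by (induction rule: Brs.induct) (use assms in auto)
qed

lemma selfadd: "(x::'k) = x + x \<Longrightarrow> x = 0"
  by (metis add_cancel_right_right)

lemma half: "(x::'k) + x = 0 \<Longrightarrow> x = 0"
proof -
  assume "x + x = 0"
  hence "2 * x = 0" by (metis mult_2)
  thus "x = 0" using two by (metis divisors_zero)
qed

lemma antisym_zero:
  fixes A :: "'s \<Rightarrow> 's \<Rightarrow> 'k"
  assumes add: "\<And>x y t. A (x + y) t = A x t + A y t"
    and cyc: "\<And>s t u. A u (br s t) + A (br u s) t + A (br t u) s = 0"
    and anti: "\<And>s t. A s t = - A t s"
  shows "A x t = 0"
proof -
  have z: "A (br u s) t = 0" for u s t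
  proof -
    have 1: "A u (br s t) + A (br u s) t + A (br t u) s = 0" by (rule cyc)
    have 2: "A s (br t u) + A (br s t) u + A (br u s) t = 0" by (rule cyc)
    have a1: "A u (br s t) = - A (br s t) u" by (rule anti)
    have a2: "A s (br t u) = - A (br t u) s" by (rule anti)
    have "A (br u s) t + A (br u s) t = (A u (br s t) + A (br u s) t + A (br t u) s) + (A s (br t u) + A (br s t) u + A (br u s) t)"
      unfolding a1 a2 by (simp add: algebra_simps)
    also have "\<dots> = 0" using 1 2 by simp
    finally have "A (br u s) t + A (br u s) t = 0" .
    thus ?thesis by (rule half)
  qed
  have A0: "A 0 t = 0" using add[of 0 0 t] by (intro selfadd) simp
  show ?thesis by (rule perfect_induct[of "\<lambda>x. A x t = 0"]) (auto simp: A0 add z)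
qed

lemma symad_zero:
  fixes P :: "'s \<Rightarrow> 's \<Rightarrow> 'k"
  assumes addL: "\<And>x y t. P (x + y) t = P x t + P y t"
    and addR: "\<And>x y t. P t (x + y) = P t x + P t y"
    and sad: "\<And>u s t. P (br u s) t = P s (br u t)"
  shows "P s y = 0"
proof -
  have negR: "P s (- y) = - P s y" for s y using addR[of s y "-y"] addR[of s 0 0]
    by (simp add: eq_neg_iff_add_eq_0)
  have diffR: "P s (x - y) = P s x - P s y" for s x y using addR[of s x "-y"] negR by simp
  have 1: "P (br (br a b) s) t = P s (br (br a b) t)" for a b s t by (rule sad)
  have 2: "P (br (br a b) s) t = - P s (br (br a b) t)" for a b s t
  proof -
    have "P (br (br a b) s) t = P (br a (br b s)) t - P (br b (br a s)) t"
      using jac2[of a b s] addL[of "br a (br b s) - br b (br a s)" "br b (br a s)" t] by simp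
    also have "\<dots> = P s (br b (br a t)) - P s (br a (br b t))" by (simp add: sad)
    also have "\<dots> = - P s (br a (br b t) - br b (br a t))" by (simp add: diffR)
    also have "\<dots> = - P s (br (br a b) t)" by (simp add: jac2)
    finally show ?thesis .
  qed
  have 3: "P s (br (br a b) t) = 0" for a b s t
    using 1[of a b s t] 2[of a b s t] half[of "P s (br (br a b) t)"] by simp
  have R0: "P s 0 = 0" for s using addR[of s 0 0] by (intro selfadd) simp
  have 4: "P s (br c t) = 0" for c s t
    by (rule perfect_induct[of "\<lambda>c. P s (br c t) = 0"]) (auto simp: br_zeroL R0 br_addL addR 3)
  show ?thesis
    by (rule perfect_induct[of "\<lambda>y. P s y = 0"]) (auto simp: R0 addR 4)
qed

end



definition Tm :: "('k::field \<Rightarrow> 's::ab_group_add \<Rightarrow> 's) \<Rightarrow> 's \<Rightarrow> ((nat \<Rightarrow> nat) \<Rightarrow> 'k) \<Rightarrow> ('k, 's) Lelem" where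
  "Tm sm s f = ((\<lambda>\<alpha>. sm (f \<alpha>) s), der_zero)"

definition Dd :: "(((nat \<Rightarrow> nat) \<Rightarrow> 'k::field) \<Rightarrow> ((nat \<Rightarrow> nat) \<Rightarrow> 'k)) \<Rightarrow> ('k, 's::ab_group_add) Lelem" where
  "Dd d = ((\<lambda>\<alpha>. 0), d)"

locale ctx = slie sm br for sm :: "'k::field \<Rightarrow> 's::ab_group_add \<Rightarrow> 's" and br +
  fixes n p :: nat and D :: "(((nat \<Rightarrow> nat) \<Rightarrow> 'k) \<Rightarrow> ((nat \<Rightarrow> nat) \<Rightarrow> 'k)) set"
  assumes p3: "p > 3" and n1: "n \<ge> 1" and sub: "lie_subalgebra_Wn n p D"
    and Dsimp: "On_D_simple n p D"
begin

abbreviation "C \<equiv> L_carrier n p D"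
abbreviation "LB \<equiv> L_br n p sm br"
abbreviation "T \<equiv> Tm sm"
abbreviation "hat s \<equiv> Tm sm s one"
abbreviation "Z0 \<equiv> (Dd der_zero :: ('k,'s) Lelem)"

lemma p0: "p > 0" using p3 by simp
lemma one_On: "one \<in> On n p" using monom_On zv_Mon p0 by blast

lemma D_Der: "d \<in> D \<Longrightarrow> d \<in> Der n p" using sub by (auto simp: lie_subalgebra_Wn_def)
lemma zero_D: "der_zero \<in> D" using sub by (simp add: lie_subalgebra_Wn_def)
lemma add_D: "d \<in> D \<Longrightarrow> e \<in> D \<Longrightarrow> der_add d e \<in> D" using sub by (simp add: lie_subalgebra_Wn_def)
lemma scale_D: "d \<in> D \<Longrightarrow> der_scale c d \<in> D" using sub by (simp add: lie_subalgebra_Wn_def)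
lemma br_D: "d \<in> D \<Longrightarrow> e \<in> D \<Longrightarrow> der_br d e \<in> D" using sub by (simp add: lie_subalgebra_Wn_def)

lemma T_C: "f \<in> On n p \<Longrightarrow> T s f \<in> C"
  by (auto simp: Tm_def L_carrier_def SO_def On_def zero_D)
lemma Dd_C: "d \<in> D \<Longrightarrow> Dd d \<in> C"
  by (auto simp: Dd_def L_carrier_def SO_def)
lemma Z0_C: "Z0 \<in> C" by (rule Dd_C[OF zero_D])

lemma Ladd_C: "X \<in> C \<Longrightarrow> Y \<in> C \<Longrightarrow> L_add X Y \<in> C"
  by (auto simp: L_add_def L_carrier_def SO_def add_D)
lemma Lscale_C: "X \<in> C \<Longrightarrow> L_scale sm c X \<in> C"
  by (auto simp: L_scale_def L_carrier_def SO_def scale_D)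

lemma SO_act_out: assumes "d \<in> Der n p" "\<gamma> \<notin> Mon n p" shows "SO_act n p sm d F \<gamma> = 0"
proof -
  have "d (monom_basis \<alpha>) \<gamma> = 0" for \<alpha> using Der_On[OF assms(1)] assms(2) by (simp add: On_def)
  thus ?thesis by (simp add: SO_act_def)
qed

lemma Lbr_C: assumes "X \<in> C" "Y \<in> C" shows "LB X Y \<in> C"
proof -
  have d: "snd X \<in> Der n p" "snd Y \<in> Der n p" using assms D_Der by (auto simp: L_carrier_def)
  show ?thesis using assms SO_act_out[OF d(1)] SO_act_out[OF d(2)]
    by (auto simp: L_br_def L_carrier_def SO_def SO_br_def br_D)
qed

lemma SO_act_der_zero: "SO_act n p sm der_zero F = (\<lambda>\<gamma>. 0)"
  by (simp add: SO_act_def der_zero_def On_zero_def)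
lemma SO_act_zeroF: "SO_act n p sm d (\<lambda>\<alpha>. 0) = (\<lambda>\<gamma>. 0)"
  by (simp add: SO_act_def)
lemma SO_br_zeroL: "SO_br n p br (\<lambda>\<alpha>. 0) G = (\<lambda>\<gamma>. 0)"
  by (auto simp: SO_br_def br_zeroL intro!: sum.neutral)
lemma SO_br_zeroR: "SO_br n p br G (\<lambda>\<alpha>. 0) = (\<lambda>\<gamma>. 0)"
  by (auto simp: SO_br_def br_zeroR intro!: sum.neutral)

lemma SO_act_T: assumes d: "d \<in> Der n p" and g: "g \<in> On n p"
  shows "SO_act n p sm d (\<lambda>\<alpha>. sm (g \<alpha>) t) = (\<lambda>\<gamma>. sm (d g \<gamma>) t)"
proof
  fix \<gamma>
  have "SO_act n p sm d (\<lambda>\<alpha>. sm (g \<alpha>) t) \<gamma> = (\<Sum>\<alpha>\<in>Mon n p. sm (g \<alpha> * d (monom_basis \<alpha>) \<gamma>) t)"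
    by (simp add: SO_act_def S.scale_scale mult.commute)
  also have "\<dots> = sm (\<Sum>\<alpha>\<in>Mon n p. g \<alpha> * d (monom_basis \<alpha>) \<gamma>) t"
    by (simp add: S.scale_sum_left)
  also have "\<dots> = sm (d g \<gamma>) t" using Der_expand[OF d g] by simp
  finally show "SO_act n p sm d (\<lambda>\<alpha>. sm (g \<alpha>) t) \<gamma> = sm (d g \<gamma>) t" .
qed

lemma SO_br_T: "SO_br n p br (\<lambda>\<alpha>. sm (f \<alpha>) s) (\<lambda>\<beta>. sm (g \<beta>) t) = (\<lambda>\<gamma>. sm (On_mult n p f g \<gamma>) (br s t))"
proof
  fix \<gamma>
  show "SO_br n p br (\<lambda>\<alpha>. sm (f \<alpha>) s) (\<lambda>\<beta>. sm (g \<beta>) t) \<gamma> = sm (On_mult n p f g \<gamma>) (br s t)"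
  proof (cases "\<gamma> \<in> Mon n p")
    case True
    have "(\<Sum>(\<alpha>, \<beta>)\<in>mon_pairs n p \<gamma>. br (sm (f \<alpha>) s) (sm (g \<beta>) t)) =
          (\<Sum>x\<in>mon_pairs n p \<gamma>. sm (f (fst x) * g (snd x)) (br s t))"
      by (simp add: case_prod_beta br_smL br_smR S.scale_scale mult.commute)
    also have "\<dots> = sm (\<Sum>x\<in>mon_pairs n p \<gamma>. f (fst x) * g (snd x)) (br s t)"
      by (simp add: S.scale_sum_left)
    finally show ?thesis using True by (simp add: SO_br_def On_mult_def case_prod_beta)
  qed (simp add: SO_br_def On_mult_def)
qed

lemma der_br_zeroR: assumes "d \<in> Der n p" shows "der_br d der_zero = der_zero"
proof -
  have h: "d On_zero \<alpha> = 0" for \<alpha> using Der_zero[OF assms] by (simp add: On_zero_def)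
  show ?thesis unfolding der_br_def der_zero_def h by (simp add: On_zero_def)
qed
lemma der_br_zeroL: assumes "d \<in> Der n p" shows "der_br der_zero d = der_zero"
proof -
  have h: "d On_zero \<alpha> = 0" for \<alpha> using Der_zero[OF assms] by (simp add: On_zero_def)
  show ?thesis unfolding der_br_def der_zero_def h by (simp add: On_zero_def)
qed

lemma Der_zero_Der: "(der_zero :: ((nat \<Rightarrow> nat) \<Rightarrow> 'k) \<Rightarrow> _) \<in> Der n p" using D_Der zero_D by blast

lemma BR1: "LB (T s f) (T t g) = T (br s t) (On_mult n p f g)"
  by (simp add: L_br_def Tm_def SO_br_T SO_act_der_zero der_br_zeroR[OF Der_zero_Der])

lemma BR2: "d \<in> D \<Longrightarrow> g \<in> On n p \<Longrightarrow> LB (Dd d) (T t g) = T t (d g)"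
  by (simp add: L_br_def Tm_def Dd_def SO_br_zeroL SO_act_T[OF D_Der] SO_act_zeroF der_br_zeroR[OF D_Der])

lemma BR3: "d \<in> D \<Longrightarrow> g \<in> On n p \<Longrightarrow> LB (T t g) (Dd d) = T (- t) (d g)"
  by (simp add: L_br_def Tm_def Dd_def SO_br_zeroR SO_act_T[OF D_Der] SO_act_der_zero der_br_zeroL[OF D_Der])

lemma BR4: "LB (Dd d) (Dd e) = Dd (der_br d e)"
  by (simp add: L_br_def Dd_def SO_br_zeroR SO_act_zeroF)

lemma T_zero_f: "T s On_zero = Z0" by (simp add: Tm_def Dd_def On_zero_def)
lemma T_zero_s: "T 0 f = Z0" by (simp add: Tm_def Dd_def)
lemma T_add_s: "T (s + t) f = L_add (T s f) (T t f)"
  by (simp add: Tm_def L_add_def S.scale_right_distrib der_add_def der_zero_def On_add_def On_zero_def)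
lemma T_sm_s: "T (sm c s) f = L_scale sm c (T s f)"
  by (simp add: Tm_def L_scale_def S.scale_scale mult.commute der_scale_def der_zero_def On_scale_def On_zero_def)
lemma T_neg_s: "T (- s) f = L_scale sm (-1) (T s f)"
  using T_sm_s[of "-1" s f] by simp
lemma T_add_f: "T s (On_add f g) = L_add (T s f) (T s g)"
  by (simp add: Tm_def L_add_def S.scale_left_distrib der_add_def der_zero_def On_add_def On_zero_def)
lemma Dd_zero: "Dd der_zero = Z0" by simp
lemma Z0_scale: "L_scale sm 0 Z0 = Z0"
  by (simp add: Dd_def L_scale_def der_scale_def der_zero_def On_scale_def On_zero_def)
lemma Dd_add: "L_add (Dd d) (Dd e) = Dd (der_add d e)" by (simp add: Dd_def L_add_def)
lemma Dd_scale: "L_scale sm c (Dd d) = Dd (der_scale c d)" by (simp add: Dd_def L_scale_def)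

end



locale ctx2 = ctx sm br n p D for sm :: "'k::field \<Rightarrow> 's::ab_group_add \<Rightarrow> 's" and br n p D +
  fixes \<phi> :: "('k, 's) Lelem \<Rightarrow> ('k, 's) Lelem \<Rightarrow> 'k"
  assumes phi: "\<phi> \<in> Z2comm (L_carrier n p D) L_add (L_scale sm) (L_br n p sm br)"
begin

lemma phiZ: "(\<forall>x y. x \<notin> C \<or> y \<notin> C \<longrightarrow> \<phi> x y = 0) \<and>
     (\<forall>x\<in>C. \<forall>y\<in>C. \<phi> x y = \<phi> y x) \<and>
     (\<forall>x\<in>C. \<forall>y\<in>C. \<forall>z\<in>C. \<phi> (L_add x y) z = \<phi> x z + \<phi> y z) \<and>
     (\<forall>c. \<forall>x\<in>C. \<forall>z\<in>C. \<phi> (L_scale sm c x) z = c * \<phi> x z) \<and>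
     (\<forall>x\<in>C. \<forall>y\<in>C. \<forall>z\<in>C. \<phi> (LB x y) z + \<phi> (LB z x) y + \<phi> (LB y z) x = 0)"
  using phi unfolding Z2comm_def mem_Collect_eq .

lemma phi_out: "X \<notin> C \<or> Y \<notin> C \<Longrightarrow> \<phi> X Y = 0" using phiZ by blast
lemma phi_sym: "\<phi> X Y = \<phi> Y X"
proof (cases "X \<in> C \<and> Y \<in> C")
  case True thus ?thesis using phiZ by blast
next
  case False thus ?thesis using phi_out[of X Y] phi_out[of Y X] by auto
qed
lemma phi_add: assumes "X \<in> C" "Y \<in> C" shows "\<phi> (L_add X Y) Z = \<phi> X Z + \<phi> Y Z"
proof (cases "Z \<in> C")
  case True thus ?thesis using phiZ assms by blast
next
  case False thus ?thesis using phi_out by auto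
qed
lemma phi_scale: assumes "X \<in> C" shows "\<phi> (L_scale sm c X) Z = c * \<phi> X Z"
proof (cases "Z \<in> C")
  case True thus ?thesis using phiZ assms by blast
next
  case False thus ?thesis using phi_out by auto
qed
lemma phi_cyc: "X \<in> C \<Longrightarrow> Y \<in> C \<Longrightarrow> Z \<in> C \<Longrightarrow> \<phi> (LB X Y) Z + \<phi> (LB Z X) Y + \<phi> (LB Y Z) X = 0"
  using phiZ by blast

lemma phi_Z0: "\<phi> Z0 Y = 0"
  using phi_scale[OF Z0_C, of 0 Y] Z0_scale by simp
lemma phi_Z0R: "\<phi> Y Z0 = 0" using phi_Z0 phi_sym by metis

lemma phi_T_add_s: "f \<in> On n p \<Longrightarrow> \<phi> (T (s + t) f) Y = \<phi> (T s f) Y + \<phi> (T t f) Y"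
  by (simp add: T_add_s phi_add T_C)
lemma phi_T_neg_s: "f \<in> On n p \<Longrightarrow> \<phi> (T (- s) f) Y = - \<phi> (T s f) Y"
  by (simp add: T_neg_s phi_scale T_C)
lemma phi_T_add_f: "f \<in> On n p \<Longrightarrow> g \<in> On n p \<Longrightarrow> \<phi> (T s (On_add f g)) Y = \<phi> (T s f) Y + \<phi> (T s g) Y"
  by (simp add: T_add_f phi_add T_C)

lemma perf_T: assumes f: "f \<in> On n p" and br0: "\<And>a b. \<phi> (T (br a b) f) Y = 0"
  shows "\<phi> (T s f) Y = 0"
  by (rule perfect_induct[of "\<lambda>s. \<phi> (T s f) Y = 0"]) (auto simp: T_zero_s phi_Z0 phi_T_add_s[OF f] br0)

lemma d_one: "d \<in> D \<Longrightarrow> d one = On_zero" using Der_one[OF D_Der p0] by blast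

lemma mult_one_one: "On_mult n p one one = one" using On_mult_one[OF one_On p0] .

lemma stepB: assumes d: "d \<in> D" shows "\<phi> (hat s) (Dd d) = 0"
proof (rule perf_T[OF one_On])
  fix a b
  have "\<phi> (LB (hat a) (hat b)) (Dd d) + \<phi> (LB (Dd d) (hat a)) (hat b) + \<phi> (LB (hat b) (Dd d)) (hat a) = 0"
    by (rule phi_cyc) (auto simp: T_C one_On Dd_C d)
  moreover have "LB (hat a) (hat b) = hat (br a b)" by (simp add: BR1 mult_one_one)
  moreover have "LB (Dd d) (hat a) = Z0" by (simp add: BR2 d one_On d_one T_zero_f)
  moreover have "LB (hat b) (Dd d) = Z0" by (simp add: BR3 d one_On d_one T_zero_f)
  ultimately show "\<phi> (hat (br a b)) (Dd d) = 0" by (simp add: phi_Z0)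
qed

lemma stepD1: assumes d: "d \<in> D" and f: "f \<in> On n p"
  shows "\<phi> (T s (d f)) (hat t) = - \<phi> (T (br s t) f) (Dd d)"
proof -
  have "\<phi> (LB (Dd d) (T s f)) (hat t) + \<phi> (LB (hat t) (Dd d)) (T s f) + \<phi> (LB (T s f) (hat t)) (Dd d) = 0"
    by (rule phi_cyc) (auto simp: T_C one_On Dd_C d f)
  moreover have "LB (Dd d) (T s f) = T s (d f)" by (simp add: BR2 d f)
  moreover have "LB (hat t) (Dd d) = Z0" by (simp add: BR3 d one_On d_one T_zero_f)
  moreover have "LB (T s f) (hat t) = T (br s t) f" by (simp add: BR1 On_mult_one[OF f p0])
  ultimately show ?thesis by (simp add: phi_Z0 eq_neg_iff_add_eq_0)
qed

lemma stepE: assumes g: "g \<in> On n p"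
  shows "\<phi> (T u g) (hat (br s t)) + \<phi> (T (br u s) g) (hat t) + \<phi> (T (br t u) g) (hat s) = 0"
proof -
  have "\<phi> (LB (hat s) (hat t)) (T u g) + \<phi> (LB (T u g) (hat s)) (hat t) + \<phi> (LB (hat t) (T u g)) (hat s) = 0"
    by (rule phi_cyc) (auto simp: T_C one_On g)
  moreover have "LB (hat s) (hat t) = hat (br s t)" by (simp add: BR1 mult_one_one)
  moreover have "LB (T u g) (hat s) = T (br u s) g" by (simp add: BR1 On_mult_one[OF g p0])
  moreover have "LB (hat t) (T u g) = T (br t u) g" by (simp add: BR1 On_mult_one_left[OF g p0])
  ultimately show ?thesis using phi_sym[of "hat (br s t)" "T u g"] by simp
qed

lemma stepK1: assumes d: "d \<in> D" and f: "f \<in> On n p"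
  shows "\<phi> (T x (d f)) (hat t) = 0"
proof -
  have df: "d f \<in> On n p" using Der_On[OF D_Der[OF d]] .
  show ?thesis
  proof (rule antisym_zero[of "\<lambda>x t. \<phi> (T x (d f)) (hat t)"])
    show "\<phi> (T (x + y) (d f)) (hat t) = \<phi> (T x (d f)) (hat t) + \<phi> (T y (d f)) (hat t)" for x y t
      by (rule phi_T_add_s[OF df])
    show "\<phi> (T u (d f)) (hat (br s t)) + \<phi> (T (br u s) (d f)) (hat t) + \<phi> (T (br t u) (d f)) (hat s) = 0" for s t u
      by (rule stepE[OF df])
    show "\<phi> (T s (d f)) (hat t) = - \<phi> (T t (d f)) (hat s)" for s t
      using stepD1[OF d f, of s t] stepD1[OF d f, of t s] br_anti[of t s] phi_T_neg_s[OF f, of "br s t" "Dd d"]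
      by simp
  qed
qed

lemma stepF: assumes d: "d \<in> D" and f: "f \<in> On n p" shows "\<phi> (T x f) (Dd d) = 0"
proof (rule perf_T[OF f])
  fix a b show "\<phi> (T (br a b) f) (Dd d) = 0" using stepD1[OF d f, of a b] stepK1[OF d f, of a b] by simp
qed

lemma stepG: assumes d: "d \<in> D" and f: "f \<in> On n p" and g: "g \<in> On n p"
  shows "\<phi> (T s (d f)) (T t g) = \<phi> (T s f) (T t (d g))"
proof -
  have "\<phi> (LB (Dd d) (T s f)) (T t g) + \<phi> (LB (T t g) (Dd d)) (T s f) + \<phi> (LB (T s f) (T t g)) (Dd d) = 0"
    by (rule phi_cyc) (auto simp: T_C Dd_C d f g)
  moreover have "LB (Dd d) (T s f) = T s (d f)" by (simp add: BR2 d f)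
  moreover have "LB (T t g) (Dd d) = T (- t) (d g)" by (simp add: BR3 d g)
  moreover have "LB (T s f) (T t g) = T (br s t) (On_mult n p f g)" by (simp add: BR1)
  moreover have "\<phi> (T (br s t) (On_mult n p f g)) (Dd d) = 0" by (rule stepF[OF d On_mult_On])
  moreover have "\<phi> (T (- t) (d g)) (T s f) = - \<phi> (T s f) (T t (d g))"
    using phi_T_neg_s[OF Der_On[OF D_Der[OF d]]] phi_sym by metis
  ultimately show ?thesis by (simp add: eq_neg_iff_add_eq_0)
qed

end



context ctx2 begin

lemma stepH: assumes f: "f \<in> On n p" and g: "g \<in> On n p"
  shows "\<phi> (T (br u s) f) (T t g) + \<phi> (T (br t u) g) (T s f) + \<phi> (T (br s t) (On_mult n p f g)) (hat u) = 0"
proof -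
  have "\<phi> (LB (hat u) (T s f)) (T t g) + \<phi> (LB (T t g) (hat u)) (T s f) + \<phi> (LB (T s f) (T t g)) (hat u) = 0"
    by (rule phi_cyc) (auto simp: T_C one_On f g)
  moreover have "LB (hat u) (T s f) = T (br u s) f" by (simp add: BR1 On_mult_one_left[OF f p0])
  moreover have "LB (T t g) (hat u) = T (br t u) g" by (simp add: BR1 On_mult_one[OF g p0])
  moreover have "LB (T s f) (T t g) = T (br s t) (On_mult n p f g)" by (simp add: BR1)
  ultimately show ?thesis by simp
qed

lemma stepK2: assumes d: "d \<in> D" and a: "a \<in> On n p" and b: "b \<in> On n p"
  shows "\<phi> (T x (On_mult n p (d a) b)) (hat u) = 0"
proof (rule perf_T[OF On_mult_On])
  fix s t
  have da: "d a \<in> On n p" and db: "d b \<in> On n p" using Der_On[OF D_Der[OF d]] by auto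
  have H1: "\<phi> (T (br u s) (d a)) (T t b) + \<phi> (T (br t u) b) (T s (d a)) + \<phi> (T (br s t) (On_mult n p (d a) b)) (hat u) = 0"
    by (rule stepH[OF da b])
  have H2: "\<phi> (T (br u s) a) (T t (d b)) + \<phi> (T (br t u) (d b)) (T s a) + \<phi> (T (br s t) (On_mult n p a (d b))) (hat u) = 0"
    by (rule stepH[OF a db])
  have G1: "\<phi> (T (br u s) (d a)) (T t b) = \<phi> (T (br u s) a) (T t (d b))" by (rule stepG[OF d a b])
  have G2: "\<phi> (T (br t u) b) (T s (d a)) = \<phi> (T (br t u) (d b)) (T s a)"
    using stepG[OF d a b, of s "br t u"] phi_sym by metis
  have E: "\<phi> (T (br s t) (On_mult n p (d a) b)) (hat u) = \<phi> (T (br s t) (On_mult n p a (d b))) (hat u)"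
    using H1 H2 G1 G2 by (metis add_left_cancel)
  have "\<phi> (T (br s t) (d (On_mult n p a b))) (hat u) = 0" by (rule stepK1[OF d On_mult_On])
  hence "\<phi> (T (br s t) (On_mult n p (d a) b)) (hat u) + \<phi> (T (br s t) (On_mult n p a (d b))) (hat u) = 0"
    using Der_mult[OF D_Der[OF d] a b] phi_T_add_f[OF On_mult_On On_mult_On] by simp
  thus "\<phi> (T (br s t) (On_mult n p (d a) b)) (hat u) = 0" unfolding E[symmetric] by (rule half)
qed

lemma pairs_zv: "mon_pairs n p zv = {(zv, zv)}"
proof -
  have 1: "a = zv \<and> b = zv" if "(a, b) \<in> mon_pairs n p zv" for a b
    using that by (auto simp: pairs_iff zv_def fun_eq_iff)
  have 2: "(zv, zv) \<in> mon_pairs n p zv"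
    using zv_Mon[OF p0] by (simp add: pairs_iff) (simp add: zv_def)
  show ?thesis using 1 2 by auto
qed

lemma Der_trivial_False: assumes triv: "\<And>d g. d \<in> D \<Longrightarrow> g \<in> On n p \<Longrightarrow> d g = On_zero" shows False
proof -
  define m where "m = {f \<in> On n p. f zv = (0::'k)}"
  have "On_ideal n p m" unfolding On_ideal_def
  proof (intro conjI ballI)
    show "m \<subseteq> On n p" by (auto simp: m_def)
    show "On_zero \<in> m" by (simp add: m_def On_zero_On) (simp add: On_zero_def)
    show "On_add f g \<in> m" if "f \<in> m" "g \<in> m" for f g
    proof -
      have "On_add f g \<in> On n p" using that by (intro On_add_On) (auto simp: m_def)
      moreover have "On_add f g zv = 0" using that by (simp add: m_def On_add_def)
      ultimately show ?thesis by (simp add: m_def)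
    qed
    show "On_mult n p f g \<in> m" if "f \<in> On n p" "g \<in> m" for f g
    proof -
      have "On_mult n p f g zv = 0" using that zv_Mon[OF p0] by (simp add: m_def On_mult_def pairs_zv)
      thus ?thesis using On_mult_On by (simp add: m_def)
    qed
  qed
  moreover have "\<forall>d\<in>D. \<forall>f\<in>m. d f \<in> m"
  proof (intro ballI)
    fix d f assume "d \<in> D" "f \<in> m"
    hence "d f = On_zero" using triv by (auto simp: m_def)
    thus "d f \<in> m" by (simp add: m_def On_zero_On) (simp add: On_zero_def)
  qed
  ultimately have "m = {On_zero} \<or> m = On n p" using Dsimp by (simp add: On_D_simple_def)
  moreover
  define e1 where "e1 = (\<lambda>i::nat. if i = 0 then 1 else (0::nat))"
  have e1M: "e1 \<in> Mon n p" using n1 p3 by (auto simp: Mon_iff e1_def)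
  have "e1 \<noteq> zv" by (auto simp: e1_def zv_def fun_eq_iff)
  hence "monom_basis e1 \<in> m" using monom_On[OF e1M] by (simp add: m_def monom_basis_def)
  moreover have "monom_basis e1 \<noteq> (On_zero :: _ \<Rightarrow> 'k)"
    by (auto simp: monom_basis_def On_zero_def fun_eq_iff)
  moreover have "one \<notin> m" by (simp add: m_def monom_basis_def)
  ultimately show False using one_On by blast
qed

lemma stepK3: assumes h: "h \<in> On n p" shows "\<phi> (T x h) (hat u) = 0"
proof -
  define J where "J = {g \<in> On n p. \<forall>h\<in>On n p. \<forall>x u. \<phi> (T x (On_mult n p g h)) (hat u) = 0}"
  have inv: "d g \<in> J" if "d \<in> D" "g \<in> On n p" for d g
    using that stepK2 Der_On[OF D_Der] by (auto simp: J_def)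
  have "On_ideal n p J" unfolding On_ideal_def
  proof (intro conjI ballI)
    show "J \<subseteq> On n p" by (auto simp: J_def)
    have z: "On_mult n p On_zero h = On_zero" for h using On_mult_zero On_mult_comm by metis
    show "On_zero \<in> J" by (simp add: J_def On_zero_On z T_zero_f phi_Z0)
    show "On_add f g \<in> J" if "f \<in> J" "g \<in> J" for f g
      using that by (simp add: J_def On_add_On On_mult_add_left phi_T_add_f On_mult_On)
    show "On_mult n p f g \<in> J" if "f \<in> On n p" "g \<in> J" for f g
    proof -
      have "On_mult n p (On_mult n p f g) h = On_mult n p g (On_mult n p f h)" for h
        by (metis On_mult_assoc On_mult_comm)
      thus ?thesis using that by (auto simp: J_def On_mult_On)
    qed
  qed
  moreover have "\<forall>d\<in>D. \<forall>f\<in>J. d f \<in> J" using inv by (auto simp: J_def)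
  ultimately have "J = {On_zero} \<or> J = On n p" using Dsimp by (simp add: On_D_simple_def)
  moreover have "J \<noteq> {On_zero}"
  proof
    assume "J = {On_zero}"
    hence "\<And>d g. d \<in> D \<Longrightarrow> g \<in> On n p \<Longrightarrow> d g = On_zero" using inv by blast
    thus False by (rule Der_trivial_False)
  qed
  ultimately have "one \<in> J" using one_On by simp
  thus ?thesis using h On_mult_one_left[OF h p0] by (auto simp: J_def)
qed

lemma stepK: assumes f: "f \<in> On n p" and g: "g \<in> On n p" shows "\<phi> (T x f) (T y g) = 0"
proof (rule symad_zero[of "\<lambda>x y. \<phi> (T x f) (T y g)"])
  show "\<phi> (T (a + b) f) (T t g) = \<phi> (T a f) (T t g) + \<phi> (T b f) (T t g)" for a b t
    by (rule phi_T_add_s[OF f])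
  show "\<phi> (T t f) (T (a + b) g) = \<phi> (T t f) (T a g) + \<phi> (T t f) (T b g)" for a b t
    using phi_T_add_s[OF g] phi_sym by metis
  show "\<phi> (T (br u s) f) (T t g) = \<phi> (T s f) (T (br u t) g)" for u s t
  proof -
    have "\<phi> (T (br u s) f) (T t g) + \<phi> (T (br t u) g) (T s f) = 0"
      using stepH[OF f g, of u s t] stepK3[OF On_mult_On] by simp
    moreover have "\<phi> (T (br t u) g) (T s f) = - \<phi> (T s f) (T (br u t) g)"
      using br_anti[of t u] phi_T_neg_s[OF g, of "br u t" "T s f"] phi_sym by metis
    ultimately show ?thesis by (simp add: eq_neg_iff_add_eq_0)
  qed
qed

end



context ctx begin

lemma der_add_zz: "der_add der_zero der_zero = der_zero"
  by (simp add: der_add_def der_zero_def On_add_def On_zero_def)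
lemma der_add_zl: "der_add der_zero e = e"
  by (simp add: der_add_def der_zero_def On_add_def On_zero_def)

lemma span_C:
  assumes X: "X \<in> C" and z: "Q Z0"
    and add: "\<And>X Y. X \<in> C \<Longrightarrow> Y \<in> C \<Longrightarrow> Q X \<Longrightarrow> Q Y \<Longrightarrow> Q (L_add X Y)"
    and t: "\<And>s f. f \<in> On n p \<Longrightarrow> Q (T s f)"
    and dd: "\<And>d. d \<in> D \<Longrightarrow> Q (Dd d)"
  shows "Q X"
proof -
  obtain F e where Xe: "X = (F, e)" and F: "F \<in> SO n p" and e: "e \<in> D"
    using X by (auto simp: L_carrier_def)
  define W where "W A = ((\<lambda>\<alpha>. if \<alpha> \<in> A then F \<alpha> else 0), (der_zero :: ((nat \<Rightarrow> nat) \<Rightarrow> 'k) \<Rightarrow> _))" for A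
  have main: "finite A \<Longrightarrow> A \<subseteq> Mon n p \<Longrightarrow> W A \<in> C \<and> Q (W A)" for A
  proof (induction A rule: finite_induct)
    case empty
    have "W {} = Z0" by (simp add: W_def Dd_def)
    thus ?case using z Z0_C by simp
  next
    case (insert a A)
    have WA: "W A \<in> C" "Q (W A)" using insert by auto
    have ma: "monom_basis a \<in> On n p" using insert monom_On by blast
    have f: "fst (W (insert a A)) \<alpha> = fst (L_add (W A) (T (F a) (monom_basis a))) \<alpha>" for \<alpha>
    proof (cases "\<alpha> = a")
      case True thus ?thesis using insert(2) by (simp add: W_def L_add_def Tm_def monom_basis_def)
    next
      case False thus ?thesis by (simp add: W_def L_add_def Tm_def monom_basis_def)
    qed
    have sn: "snd (W (insert a A)) = snd (L_add (W A) (T (F a) (monom_basis a)))"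
      by (simp add: W_def L_add_def Tm_def der_add_zz)
    have eq: "W (insert a A) = L_add (W A) (T (F a) (monom_basis a))"
      using f sn by (intro prod_eqI ext) auto
    show ?case unfolding eq using WA T_C[OF ma] t[OF ma] add Ladd_C by blast
  qed
  have "W (Mon n p) = (F, der_zero)" using F by (auto simp: W_def SO_def fun_eq_iff)
  hence W: "(F, der_zero) \<in> C" "Q (F, der_zero)" using main[OF finite_Mon[of n p]] by auto
  have "X = L_add (F, der_zero) (Dd e)" by (simp add: Xe L_add_def Dd_def der_add_zl)
  thus ?thesis using W Dd_C[OF e] dd[OF e] add by simp
qed

end

context ctx2 begin

lemma stepA: assumes f: "f \<in> On n p" and Y: "Y \<in> C" shows "\<phi> (T x f) Y = 0"
proof (rule span_C[OF Y, where Q="\<lambda>Y. \<phi> (T x f) Y = 0"])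
  show "\<phi> (T x f) Z0 = 0" by (rule phi_Z0R)
  show "\<phi> (T x f) (L_add X Y) = 0" if "X \<in> C" "Y \<in> C" "\<phi> (T x f) X = 0" "\<phi> (T x f) Y = 0" for X Y
  proof -
    have "\<phi> (T x f) (L_add X Y) = \<phi> (L_add X Y) (T x f)" by (rule phi_sym)
    also have "\<dots> = \<phi> X (T x f) + \<phi> Y (T x f)" by (rule phi_add[OF that(1,2)])
    also have "\<dots> = 0" using that(3,4) phi_sym[of X] phi_sym[of Y] by simp
    finally show ?thesis .
  qed
  show "\<phi> (T x f) (T s g) = 0" if "g \<in> On n p" for s g by (rule stepK[OF f that])
  show "\<phi> (T x f) (Dd d) = 0" if "d \<in> D" for d by (rule stepF[OF that f])
qed

lemma main_eq: assumes X: "X \<in> C" and Y: "Y \<in> C" shows "\<phi> X Y = \<phi> (Dd (snd X)) Y"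
proof (rule span_C[OF X, where Q="\<lambda>X. \<phi> X Y = \<phi> (Dd (snd X)) Y"])
  show "\<phi> Z0 Y = \<phi> (Dd (snd Z0)) Y" by (simp add: Dd_def)
  show "\<phi> (L_add X1 X2) Y = \<phi> (Dd (snd (L_add X1 X2))) Y"
    if h: "X1 \<in> C" "X2 \<in> C" "\<phi> X1 Y = \<phi> (Dd (snd X1)) Y" "\<phi> X2 Y = \<phi> (Dd (snd X2)) Y" for X1 X2
  proof -
    have d: "snd X1 \<in> D" "snd X2 \<in> D" using h by (auto simp: L_carrier_def)
    have "\<phi> (L_add X1 X2) Y = \<phi> (Dd (snd X1)) Y + \<phi> (Dd (snd X2)) Y" using h phi_add by simp
    also have "\<dots> = \<phi> (L_add (Dd (snd X1)) (Dd (snd X2))) Y" using phi_add[OF Dd_C Dd_C] d by simp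
    also have "\<dots> = \<phi> (Dd (snd (L_add X1 X2))) Y"
    proof -
      have "snd (L_add X1 X2) = der_add (snd X1) (snd X2)" by (simp add: L_add_def)
      thus ?thesis by (simp add: Dd_add)
    qed
    finally show ?thesis .
  qed
  show "\<phi> (T s f) Y = \<phi> (Dd (snd (T s f))) Y" if "f \<in> On n p" for s f
    using stepA[OF that Y] by (simp add: Tm_def phi_Z0)
  show "\<phi> (Dd d) Y = \<phi> (Dd (snd (Dd d))) Y" for d by (simp add: Dd_def)
qed

lemma main_final: assumes X: "X \<in> C" and Y: "Y \<in> C" shows "\<phi> X Y = \<phi> (Dd (snd X)) (Dd (snd Y))"
proof -
  have dX: "Dd (snd X) \<in> C" using X Dd_C by (auto simp: L_carrier_def)
  have "\<phi> X Y = \<phi> (Dd (snd X)) Y" by (rule main_eq[OF X Y])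
  also have "\<dots> = \<phi> Y (Dd (snd X))" by (rule phi_sym)
  also have "\<dots> = \<phi> (Dd (snd Y)) (Dd (snd X))" by (rule main_eq[OF Y dX])
  also have "\<dots> = \<phi> (Dd (snd X)) (Dd (snd Y))" by (rule phi_sym)
  finally show ?thesis .
qed

end



lemma snd_Ladd: "snd (L_add X Y) = der_add (snd X) (snd Y)" by (simp add: L_add_def)
lemma snd_Lscale: "snd (L_scale sm c X) = der_scale c (snd X)" by (simp add: L_scale_def)
lemma snd_Lbr: "snd (L_br n p sm br X Y) = der_br (snd X) (snd Y)" by (simp add: L_br_def)

theorem theorem6p1:
  fixes p n :: nat
    and D :: "(((nat \<Rightarrow> nat) \<Rightarrow> 'k::field) \<Rightarrow> ((nat \<Rightarrow> nat) \<Rightarrow> 'k)) set"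
    and sm :: "'k \<Rightarrow> 's::ab_group_add \<Rightarrow> 's"
    and br :: "'s \<Rightarrow> 's \<Rightarrow> 's"
  assumes "CHAR('k) = p" and "p > 3"
    and "n \<ge> 1"
    and "lie_subalgebra_Wn n p D"
    and "On_D_simple n p D"
    and "simple_lie_algebra sm br" and "finite_dim sm"
  shows "forms_iso
           (Z2comm (L_carrier n p D) L_add (L_scale sm) (L_br n p sm br))
           (Z2comm D der_add der_scale der_br)"
proof -
  have two: "(2::'k) \<noteq> 0"
  proof
    assume "(2::'k) = 0"
    hence "of_nat 2 = (0::'k)" by simp
    hence "CHAR('k) dvd 2" by (simp only: of_nat_eq_0_iff_char_dvd)
    thus False using assms(1,2) by (auto dest: dvd_imp_le)
  qed
  interpret ctx sm br n p D
    by unfold_locales (use assms two in auto)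
  define \<Psi> :: "(('k,'s) Lelem \<Rightarrow> ('k,'s) Lelem \<Rightarrow> 'k) \<Rightarrow> _ \<Rightarrow> _ \<Rightarrow> 'k"
    where "\<Psi> \<phi> = (\<lambda>d e. if d \<in> D \<and> e \<in> D then \<phi> (Dd d) (Dd e) else 0)" for \<phi>
  define \<Phi> :: "(_ \<Rightarrow> _ \<Rightarrow> 'k) \<Rightarrow> ('k,'s) Lelem \<Rightarrow> ('k,'s) Lelem \<Rightarrow> 'k"
    where "\<Phi> \<psi> = (\<lambda>X Y. if X \<in> C \<and> Y \<in> C then \<psi> (snd X) (snd Y) else 0)" for \<psi>
  let ?A = "Z2comm C L_add (L_scale sm) LB"
  let ?B = "Z2comm D der_add der_scale der_br"
  have sndD: "snd X \<in> D" if "X \<in> C" for X using that by (auto simp: L_carrier_def)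
  have 1: "\<forall>\<phi>\<in>?A. \<Phi> (\<Psi> \<phi>) = \<phi>"
  proof
    fix \<phi> assume ph: "\<phi> \<in> ?A"
    interpret ctx2 sm br n p D \<phi> by unfold_locales (rule ph)
    show "\<Phi> (\<Psi> \<phi>) = \<phi>"
    proof (intro ext)
      fix X Y show "\<Phi> (\<Psi> \<phi>) X Y = \<phi> X Y"
      proof (cases "X \<in> C \<and> Y \<in> C")
        case True thus ?thesis using main_final[of X Y] sndD[of X] sndD[of Y] by (simp add: \<Phi>_def \<Psi>_def)
      next
        case False thus ?thesis using phi_out[of X Y] by (auto simp: \<Phi>_def)
      qed
    qed
  qed
  have 2: "\<forall>\<psi>\<in>?B. \<Psi> (\<Phi> \<psi>) = \<psi>"
  proof
    fix \<psi> assume ps: "\<psi> \<in> ?B"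
    show "\<Psi> (\<Phi> \<psi>) = \<psi>"
    proof (intro ext)
      fix d e show "\<Psi> (\<Phi> \<psi>) d e = \<psi> d e"
      proof (cases "d \<in> D \<and> e \<in> D")
        case True thus ?thesis using Dd_C[of d] Dd_C[of e] unfolding Dd_def by (auto simp: \<Phi>_def \<Psi>_def Dd_def)
      next
        case False thus ?thesis using ps by (auto simp: \<Psi>_def Z2comm_def)
      qed
    qed
  qed
  have 3: "\<Psi> ` ?A \<subseteq> ?B"
  proof
    fix \<chi> assume "\<chi> \<in> \<Psi> ` ?A"
    then obtain \<phi> where ph: "\<phi> \<in> ?A" and ch: "\<chi> = \<Psi> \<phi>" by blast
    interpret ctx2 sm br n p D \<phi> by unfold_locales (rule ph)
    show "\<chi> \<in> ?B" unfolding Z2comm_def mem_Collect_eq ch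
    proof (intro conjI allI ballI impI)
      show "\<Psi> \<phi> x y = 0" if "x \<notin> D \<or> y \<notin> D" for x y using that by (auto simp: \<Psi>_def)
      show "\<Psi> \<phi> x y = \<Psi> \<phi> y x" if "x \<in> D" "y \<in> D" for x y
        using that phi_sym by (simp add: \<Psi>_def)
      show "\<Psi> \<phi> (der_add x y) z = \<Psi> \<phi> x z + \<Psi> \<phi> y z" if "x \<in> D" "y \<in> D" "z \<in> D" for x y z
      proof -
        have "\<phi> (Dd (der_add x y)) (Dd z) = \<phi> (L_add (Dd x) (Dd y)) (Dd z)" by (simp add: Dd_add)
        also have "\<dots> = \<phi> (Dd x) (Dd z) + \<phi> (Dd y) (Dd z)" using phi_add[OF Dd_C Dd_C] that by simp
        finally show ?thesis using that add_D by (simp add: \<Psi>_def)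
      qed
      show "\<Psi> \<phi> (der_scale c x) z = c * \<Psi> \<phi> x z" if "x \<in> D" "z \<in> D" for c x z
      proof -
        have "\<phi> (Dd (der_scale c x)) (Dd z) = \<phi> (L_scale sm c (Dd x)) (Dd z)" by (simp add: Dd_scale)
        also have "\<dots> = c * \<phi> (Dd x) (Dd z)" using phi_scale[OF Dd_C] that by simp
        finally show ?thesis using that scale_D by (simp add: \<Psi>_def)
      qed
      show "\<Psi> \<phi> (der_br x y) z + \<Psi> \<phi> (der_br z x) y + \<Psi> \<phi> (der_br y z) x = 0"
        if "x \<in> D" "y \<in> D" "z \<in> D" for x y z
        using that br_D phi_cyc[OF Dd_C Dd_C Dd_C, of x y z] by (simp add: \<Psi>_def BR4)
    qed
  qed
  have 4: "\<Phi> ` ?B \<subseteq> ?A"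
  proof
    fix \<chi> assume "\<chi> \<in> \<Phi> ` ?B"
    then obtain \<psi> where ps: "\<psi> \<in> ?B" and ch: "\<chi> = \<Phi> \<psi>" by blast
    have P: "(\<forall>x y. x \<notin> D \<or> y \<notin> D \<longrightarrow> \<psi> x y = 0) \<and>
     (\<forall>x\<in>D. \<forall>y\<in>D. \<psi> x y = \<psi> y x) \<and>
     (\<forall>x\<in>D. \<forall>y\<in>D. \<forall>z\<in>D. \<psi> (der_add x y) z = \<psi> x z + \<psi> y z) \<and>
     (\<forall>c. \<forall>x\<in>D. \<forall>z\<in>D. \<psi> (der_scale c x) z = c * \<psi> x z) \<and>
     (\<forall>x\<in>D. \<forall>y\<in>D. \<forall>z\<in>D. \<psi> (der_br x y) z + \<psi> (der_br z x) y + \<psi> (der_br y z) x = 0)"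
      using ps unfolding Z2comm_def mem_Collect_eq .
    hence P2: "\<forall>x\<in>D. \<forall>y\<in>D. \<psi> x y = \<psi> y x"
      and P3: "\<forall>x\<in>D. \<forall>y\<in>D. \<forall>z\<in>D. \<psi> (der_add x y) z = \<psi> x z + \<psi> y z"
      and P4: "\<forall>c. \<forall>x\<in>D. \<forall>z\<in>D. \<psi> (der_scale c x) z = c * \<psi> x z"
      and P5: "\<forall>x\<in>D. \<forall>y\<in>D. \<forall>z\<in>D. \<psi> (der_br x y) z + \<psi> (der_br z x) y + \<psi> (der_br y z) x = 0"
      by auto
    show "\<chi> \<in> ?A" unfolding Z2comm_def mem_Collect_eq ch
    proof (intro conjI allI ballI impI)
      show "\<Phi> \<psi> x y = 0" if "x \<notin> C \<or> y \<notin> C" for x y using that by (auto simp: \<Phi>_def)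
      show "\<Phi> \<psi> x y = \<Phi> \<psi> y x" if "x \<in> C" "y \<in> C" for x y
        using that P2 sndD[OF that(1)] sndD[OF that(2)] by (simp add: \<Phi>_def)
      show "\<Phi> \<psi> (L_add x y) z = \<Phi> \<psi> x z + \<Phi> \<psi> y z" if "x \<in> C" "y \<in> C" "z \<in> C" for x y z
        using that P3 sndD[OF that(1)] sndD[OF that(2)] sndD[OF that(3)] Ladd_C[OF that(1,2)] by (simp add: \<Phi>_def snd_Ladd)
      show "\<Phi> \<psi> (L_scale sm c x) z = c * \<Phi> \<psi> x z" if "x \<in> C" "z \<in> C" for c x z
        using that P4 sndD[OF that(1)] sndD[OF that(2)] Lscale_C[OF that(1)] by (simp add: \<Phi>_def snd_Lscale)
      show "\<Phi> \<psi> (LB x y) z + \<Phi> \<psi> (LB z x) y + \<Phi> \<psi> (LB y z) x = 0"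
        if "x \<in> C" "y \<in> C" "z \<in> C" for x y z
        using that P5 sndD[OF that(1)] sndD[OF that(2)] sndD[OF that(3)] Lbr_C[OF that(1,2)] Lbr_C[OF that(3,1)] Lbr_C[OF that(2,3)]
        by (simp add: \<Phi>_def snd_Lbr)
    qed
  qed
  have bij: "bij_betw \<Psi> ?A ?B" by (rule bij_betw_byWitness[OF 1 2 3 4])
  show ?thesis unfolding forms_iso_def
  proof (intro exI conjI ballI allI)
    show "bij_betw \<Psi> ?A ?B" by (rule bij)
    show "\<Psi> (\<lambda>x y. \<phi> x y + \<psi> x y) = (\<lambda>x y. \<Psi> \<phi> x y + \<Psi> \<psi> x y)" for \<phi> \<psi>
      by (simp add: \<Psi>_def fun_eq_iff)
    show "\<Psi> (\<lambda>x y. c * \<phi> x y) = (\<lambda>x y. c * \<Psi> \<phi> x y)" for c \<phi>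
      by (simp add: \<Psi>_def fun_eq_iff)
  qed
qed



end
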